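(* Fix $\lambda>0$ and an initial $\boldsymbol\alpha^{(0)}\in\mathbb R^{2nK}_{\ge0}$. Assume a solver is available that returns the optimal solution of the sub-problem $\max_{\boldsymbol\alpha\ge\mathbf0}D^{\mathcal F}_\lambda(\boldsymbol\alpha)$ (equivalently of $\min_{\mathbf m_{\mathcal F}\ge\mathbf0}P^{\mathcal F}_\lambda(\mathbf m_{\mathcal F})$) for any given $\mathcal F\subseteq[p]$. Consider the working set method: for $t=1,2,\dots$, set $\mathcal W_t=\{k\in[p]:\mathbf C_{k,:}\boldsymbol\alpha^{(t-1)}>\lambda\}$ and let $\boldsymbol\alpha^{(t)}$ be the optimal solution of the sub-problem with $\mathcal F=\mathcal W_t$. Then after finitely many steps this method returns the optimal solution of the original problem, i.e. there is a finite $T$ such that $\boldsymbol\alpha^{(T)}$ is the optimal solution of $\max_{\boldsymbol\alpha\ge\mathbf0}D_\lambda(\boldsymbol\alpha)$.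
   Context: Let $n,K,p\ge1$ be integers, $[n]=\{1,\dots,n\}$. For each $i\in[n]$ let $\mathbf x_i\in\mathbb R^p$ have nonnegative entries and let $\mathcal D_i,\mathcal S_i\subseteq[n]$ be sets of size $K$. Put $\mathbf c_{ij}=(\mathbf x_i-\mathbf x_j)\circ(\mathbf x_i-\mathbf x_j)$ (entrywise product). Vectors in $\mathbb R^{2nK}$ are indexed by the pairs $(i,l)$, $l\in\mathcal D_i$ ("different-class pairs") and $(i,j)$, $j\in\mathcal S_i$ ("same-class pairs"). $\mathbf C\in\mathbb R^{p\times2nK}$ has column $\mathbf c_{il}$ for each different-class pair and $-\mathbf c_{ij}$ for each same-class pair; $\mathbf C_{k,:}$ is its $k$-th row. Fix $L\ge U\ge0$, $\eta>0$; let $\mathbf t\in\mathbb R^{2nK}$ have entry $L$ at different-class pairs and $-U$ at same-class pairs; $\ell_s(x)=([s-x]_+)^2$ with $[z]_+=\max\{z,0\}$ (entrywise for vectors); $\mathbf1$ is the all-ones vector; for a vector $\mathbf v\in\mathbb R^p$ and $\mathcal F\subseteq[p]$, $\mathbf v_{\mathcal F}$ is the sub-vector of entries indexed by $\mathcal F$. The original primal and dual problems are $\min_{\mathbf m\in\mathbb R^p_{\ge0}}P_\lambda(\mathbf m)$ and $\max_{\boldsymbol\alpha\in\mathbb R^{2nK}_{\ge0}}D_\lambda(\boldsymbol\alpha)$, where $$P_\lambda(\mathbf m)=\sum_{i\in[n]}\Big[\sum_{l\in\mathcal D_i}\ell_L(\mathbf m^\top\mathbf c_{il})+\sum_{j\in\mathcal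 S_i}\ell_{-U}(-\mathbf m^\top\mathbf c_{ij})\Big]+\lambda\Big(\mathbf m^\top\mathbf1+\frac\eta2\|\mathbf m\|_2^2\Big),$$ $$D_\lambda(\boldsymbol\alpha)=-\frac14\|\boldsymbol\alpha\|_2^2+\mathbf t^\top\boldsymbol\alpha-\frac{\lambda\eta}2\|\mathbf m_\lambda(\boldsymbol\alpha)\|_2^2,\qquad\mathbf m_\lambda(\boldsymbol\alpha)=\frac1{\lambda\eta}[\mathbf C\boldsymbol\alpha-\lambda\mathbf1]_+.$$ For $\mathcal F\subseteq[p]$ the sub-problems fix $m_k=0$ for $k\notin\mathcal F$: $P^{\mathcal F}_\lambda(\mathbf m_{\mathcal F})$ is $P_\lambda$ with $\mathbf m$, $\mathbf c_{il}$, $\mathbf c_{ij}$ replaced by their sub-vectors indexed by $\mathcal F$ (minimized over $\mathbf m_{\mathcal F}\ge\mathbf0$), and $$D^{\mathcal F}_\lambda(\boldsymbol\alpha)=-\frac14\|\boldsymbol\alpha\|_2^2+\mathbf t^\top\boldsymbol\alpha-\frac{\lambda\eta}2\|\mathbf m_\lambda(\boldsymbol\alpha)_{\mathcal F}\|_2^2$$ (maximized over $\boldsymbol\alpha\ge\mathbf0$). *)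

theory Defs
  imports Complex_Main
begin

text \<open>Index set of \<open>\<real>^{2nK}\<close>: a pair is a triple (tag, i, j); tag True marks a
  different-class pair (i,l) with l in D i, tag False a same-class pair (i,j) with j in S i.
  Vectors in \<open>\<real>^{2nK}\<close> are functions on this index type, vanishing outside pair_idx.\<close>

definition pair_idx :: "nat \<Rightarrow> (nat \<Rightarrow> nat set) \<Rightarrow> (nat \<Rightarrow> nat set) \<Rightarrow> (bool \<times> nat \<times> nat) set" where
  "pair_idx n D S = {(True, i, l) | i l. i \<in> {1..n} \<and> l \<in> D i}
                  \<union> {(False, i, j) | i j. i \<in> {1..n} \<and> j \<in> S i}"

definition dual_feasible :: "(bool \<times> nat \<times> nat) set \<Rightarrow> ((bool \<times> nat \<times> nat) \<Rightarrow> real) set" where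
  "dual_feasible I = {\<alpha>. (\<forall>z\<in>I. \<alpha> z \<ge> 0) \<and> (\<forall>z. z \<notin> I \<longrightarrow> \<alpha> z = 0)}"

definition cvec :: "(nat \<Rightarrow> nat \<Rightarrow> real) \<Rightarrow> nat \<Rightarrow> nat \<Rightarrow> nat \<Rightarrow> real" where
  "cvec x i j k = (x i k - x j k)^2"

definition Cmat :: "(nat \<Rightarrow> nat \<Rightarrow> real) \<Rightarrow> nat \<Rightarrow> (bool \<times> nat \<times> nat) \<Rightarrow> real" where
  "Cmat x k z = (case z of (b, i, j) \<Rightarrow> if b then cvec x i j k else - cvec x i j k)"

definition Crow_mult :: "(nat \<Rightarrow> nat \<Rightarrow> real) \<Rightarrow> (bool \<times> nat \<times> nat) set \<Rightarrow> nat \<Rightarrow> ((bool \<times> nat \<times> nat) \<Rightarrow> real) \<Rightarrow> real" where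
  "Crow_mult x I k \<alpha> = (\<Sum>z\<in>I. Cmat x k z * \<alpha> z)"

definition tvec :: "real \<Rightarrow> real \<Rightarrow> (bool \<times> nat \<times> nat) \<Rightarrow> real" where
  "tvec L U z = (if fst z then L else - U)"

definition m_lam :: "(nat \<Rightarrow> nat \<Rightarrow> real) \<Rightarrow> (bool \<times> nat \<times> nat) set \<Rightarrow> real \<Rightarrow> real \<Rightarrow> ((bool \<times> nat \<times> nat) \<Rightarrow> real) \<Rightarrow> nat \<Rightarrow> real" where
  "m_lam x I lam eta \<alpha> k = max (Crow_mult x I k \<alpha> - lam) 0 / (lam * eta)"

definition dual_sub :: "(nat \<Rightarrow> nat \<Rightarrow> real) \<Rightarrow> (bool \<times> nat \<times> nat) set \<Rightarrow> real \<Rightarrow> real \<Rightarrow> real \<Rightarrow> real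
     \<Rightarrow> nat set \<Rightarrow> ((bool \<times> nat \<times> nat) \<Rightarrow> real) \<Rightarrow> real" where
  "dual_sub x I L U lam eta F \<alpha> =
     - (1/4) * (\<Sum>z\<in>I. (\<alpha> z)^2) + (\<Sum>z\<in>I. tvec L U z * \<alpha> z)
     - (lam * eta / 2) * (\<Sum>k\<in>F. (m_lam x I lam eta \<alpha> k)^2)"

definition dual_obj :: "(nat \<Rightarrow> nat \<Rightarrow> real) \<Rightarrow> (bool \<times> nat \<times> nat) set \<Rightarrow> nat \<Rightarrow> real \<Rightarrow> real \<Rightarrow> real \<Rightarrow> real
     \<Rightarrow> ((bool \<times> nat \<times> nat) \<Rightarrow> real) \<Rightarrow> real" where
  "dual_obj x I p L U lam eta \<alpha> =
     - (1/4) * (\<Sum>z\<in>I. (\<alpha> z)^2) + (\<Sum>z\<in>I. tvec L U z * \<alpha> z)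
     - (lam * eta / 2) * (\<Sum>k\<in>{1..p}. (m_lam x I lam eta \<alpha> k)^2)"

definition is_maximizer :: "('a \<Rightarrow> real) \<Rightarrow> 'a set \<Rightarrow> 'a \<Rightarrow> bool" where
  "is_maximizer f A a \<longleftrightarrow> a \<in> A \<and> (\<forall>b\<in>A. f b \<le> f a)"

definition working_set :: "(nat \<Rightarrow> nat \<Rightarrow> real) \<Rightarrow> (bool \<times> nat \<times> nat) set \<Rightarrow> nat \<Rightarrow> real
     \<Rightarrow> ((bool \<times> nat \<times> nat) \<Rightarrow> real) \<Rightarrow> nat set" where
  "working_set x I p lam \<alpha> = {k \<in> {1..p}. Crow_mult x I k \<alpha> > lam}"

end

theory Submission
  imports Defs
begin

lemma real_ge: fixes e u :: real assumes "e > 0"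
  shows "(e/2)*(max u 0/e)^2 \<ge> (max w 0/e)*u - (e/2)*(max w 0/e)^2"
proof -
  let ?p = "max u 0" let ?q = "max w 0"
  have "?q*u \<le> ?q*?p" by (simp add: mult_left_mono)
  moreover have "0 \<le> (?p - ?q)^2" by simp
  ultimately have h: "2*?q*u - ?q^2 \<le> ?p^2" by (simp add: power2_eq_square algebra_simps)
  have e1: "(e/2)*(?p/e)^2 = ?p^2/(2*e)" using assms by (simp add: field_simps power2_eq_square)
  have e2: "(?q/e)*u - (e/2)*(?q/e)^2 = (2*?q*u - ?q^2)/(2*e)" using assms by (simp add: field_simps power2_eq_square)
  show ?thesis unfolding e1 e2 using h assms by (simp add: divide_right_mono)
qed

lemma real_eq: fixes e w :: real assumes "e > 0"
  shows "(e/2)*(max w 0/e)^2 = (max w 0/e)*w - (e/2)*(max w 0/e)^2"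
proof -
  have "max w 0 * max w 0 = max w 0 * w" by (simp add: max_def)
  then show ?thesis using assms by (simp add: field_simps power2_eq_square)
qed

lemma real_gap: fixes e u w :: real assumes "e > 0"
  shows "(e/2)*(max u 0/e)^2 \<le> (max w 0/e)*u - (e/2)*(max w 0/e)^2 + (u-w)^2/(2*e)"
proof -
  let ?p = "max u 0" let ?q = "max w 0"
  have h: "?p^2 \<le> 2*?q*u - ?q^2 + (u-w)^2"
  proof (cases "w \<ge> 0")
    case True
    then have "?q = w" by simp
    moreover have "?p^2 \<le> u^2" by (simp add: max_def power2_eq_square)
    ultimately show ?thesis by (simp add: power2_eq_square algebra_simps)
  next
    case False
    then have "?q = 0" by simp
    moreover have "?p^2 \<le> (u-w)^2"
      using False by (cases "u \<ge> 0") (auto simp: max_def power2_eq_square intro!: mult_mono)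
    ultimately show ?thesis by simp
  qed
  have e1: "(e/2)*(?p/e)^2 = ?p^2/(2*e)" using assms by (simp add: field_simps power2_eq_square)
  have e2: "(?q/e)*u - (e/2)*(?q/e)^2 + (u-w)^2/(2*e) = (2*?q*u - ?q^2 + (u-w)^2)/(2*e)" using assms by (simp add: field_simps power2_eq_square)
  show ?thesis unfolding e1 e2 using h assms by (simp add: divide_right_mono)
qed


definition Lag :: "(nat \<Rightarrow> nat \<Rightarrow> real) \<Rightarrow> (bool \<times> nat \<times> nat) set \<Rightarrow> real \<Rightarrow> real \<Rightarrow> real \<Rightarrow> real
     \<Rightarrow> nat set \<Rightarrow> ((bool \<times> nat \<times> nat) \<Rightarrow> real) \<Rightarrow> ((bool \<times> nat \<times> nat) \<Rightarrow> real) \<Rightarrow> real" where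
  "Lag x I L U lam eta F a b =
     - (1/4) * (\<Sum>z\<in>I. (b z)^2) + (\<Sum>z\<in>I. tvec L U z * b z)
     - (\<Sum>k\<in>F. m_lam x I lam eta a k * (Crow_mult x I k b - lam))
     + (lam * eta / 2) * (\<Sum>k\<in>F. (m_lam x I lam eta a k)^2)"

definition cmb :: "('z \<Rightarrow> real) \<Rightarrow> ('z \<Rightarrow> real) \<Rightarrow> real \<Rightarrow> 'z \<Rightarrow> real" where
  "cmb a b s = (\<lambda>z. a z + s * (b z - a z))"

lemma crow_cmb: "Crow_mult x I k (cmb a b s) = Crow_mult x I k a + s * (Crow_mult x I k b - Crow_mult x I k a)"
  by (simp add: Crow_mult_def cmb_def algebra_simps sum.distrib sum_subtractf sum_distrib_left)

lemma lag_cmb: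
  "Lag x I L U lam eta F a (cmb b0 b1 s) = (1-s) * Lag x I L U lam eta F a b0 + s * Lag x I L U lam eta F a b1
      + s*(1-s)/4 * (\<Sum>z\<in>I. (b1 z - b0 z)^2)"
proof -
  have q: "(\<Sum>z\<in>I. (cmb b0 b1 s z)^2) = (1-s)*(\<Sum>z\<in>I. (b0 z)^2) + s*(\<Sum>z\<in>I. (b1 z)^2) - s*(1-s)*(\<Sum>z\<in>I. (b1 z - b0 z)^2)"
  proof -
    have "(\<Sum>z\<in>I. (cmb b0 b1 s z)^2) = (\<Sum>z\<in>I. (1-s)*(b0 z)^2 + s*(b1 z)^2 - s*(1-s)*(b1 z - b0 z)^2)"
      by (rule sum.cong) (auto simp: cmb_def power2_eq_square algebra_simps)
    then show ?thesis by (simp add: sum.distrib sum_subtractf sum_distrib_left)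
  qed
  have l: "(\<Sum>z\<in>I. tvec L U z * cmb b0 b1 s z) = (1-s)*(\<Sum>z\<in>I. tvec L U z * b0 z) + s*(\<Sum>z\<in>I. tvec L U z * b1 z)"
  proof -
    have "(\<Sum>z\<in>I. tvec L U z * cmb b0 b1 s z) = (\<Sum>z\<in>I. (1-s)*(tvec L U z * b0 z) + s*(tvec L U z * b1 z))"
      by (rule sum.cong) (auto simp: cmb_def algebra_simps)
    then show ?thesis by (simp add: sum.distrib sum_distrib_left)
  qed
  have c: "(\<Sum>k\<in>F. m_lam x I lam eta a k * (Crow_mult x I k (cmb b0 b1 s) - lam))
     = (1-s)*(\<Sum>k\<in>F. m_lam x I lam eta a k * (Crow_mult x I k b0 - lam)) + s*(\<Sum>k\<in>F. m_lam x I lam eta a k * (Crow_mult x I k b1 - lam))"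
  proof -
    have "(\<Sum>k\<in>F. m_lam x I lam eta a k * (Crow_mult x I k (cmb b0 b1 s) - lam))
       = (\<Sum>k\<in>F. (1-s)*(m_lam x I lam eta a k * (Crow_mult x I k b0 - lam)) + s*(m_lam x I lam eta a k * (Crow_mult x I k b1 - lam)))"
      by (rule sum.cong) (auto simp: crow_cmb algebra_simps)
    then show ?thesis by (simp add: sum.distrib sum_distrib_left)
  qed
  show ?thesis unfolding Lag_def q l c by (simp add: field_simps)
qed

lemma cmb_feasible: assumes "a \<in> dual_feasible I" "b \<in> dual_feasible I" "0 \<le> s" "s \<le> 1"
  shows "cmb a b s \<in> dual_feasible I"
proof -
  have "\<And>z. z \<in> I \<Longrightarrow> 0 \<le> a z + s * (b z - a z)"
  proof -
    fix z assume z: "z \<in> I"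
    then have "0 \<le> a z" "0 \<le> b z" using assms(1,2) by (auto simp: dual_feasible_def)
    then have "0 \<le> (1-s) * a z + s * b z" using assms(3,4) by simp
    then show "0 \<le> a z + s * (b z - a z)" by (simp add: algebra_simps)
  qed
  then show ?thesis using assms(1,2) by (auto simp: dual_feasible_def cmb_def)
qed


lemma m_lam_eq: "m_lam x I lam eta a k = max (Crow_mult x I k a - lam) 0 / (lam*eta)"
  by (simp add: m_lam_def)

lemma lag_at: assumes "lam > 0" "eta > 0"
  shows "Lag x I L U lam eta F a a = dual_sub x I L U lam eta F a"
proof -
  have e: "lam*eta > 0" using assms by simp
  have "(lam*eta/2) * (\<Sum>k\<in>F. (m_lam x I lam eta a k)^2)
     = (\<Sum>k\<in>F. m_lam x I lam eta a k * (Crow_mult x I k a - lam) - (lam*eta/2)*(m_lam x I lam eta a k)^2)"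
    unfolding sum_distrib_left
  proof (rule sum.cong)
    fix k
    show "(lam*eta/2) * (m_lam x I lam eta a k)^2 = m_lam x I lam eta a k * (Crow_mult x I k a - lam) - (lam*eta/2)*(m_lam x I lam eta a k)^2"
      unfolding m_lam_def by (rule real_eq[OF e])
  qed simp
  then show ?thesis unfolding Lag_def dual_sub_def by (simp add: sum_subtractf sum_distrib_left)
qed

lemma lag_upper: assumes "lam > 0" "eta > 0" "finite F" "finite G"
    "\<forall>k\<in>F-G. m_lam x I lam eta a k = 0"
  shows "dual_sub x I L U lam eta G b \<le> Lag x I L U lam eta F a b"
proof -
  have e: "lam*eta > 0" using assms by simp
  let ?f = "\<lambda>k. m_lam x I lam eta a k * (Crow_mult x I k b - lam) - (lam*eta/2)*(m_lam x I lam eta a k)^2"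
  let ?g = "\<lambda>k. (lam*eta/2)*(m_lam x I lam eta b k)^2"
  have s1: "(\<Sum>k\<in>F. ?f k) = (\<Sum>k\<in>F\<inter>G. ?f k) + (\<Sum>k\<in>F-G. ?f k)"
    using assms(3) by (rule sum.Int_Diff)
  have s2: "(\<Sum>k\<in>F-G. ?f k) = 0" using assms(5) by simp
  have s3: "(\<Sum>k\<in>F\<inter>G. ?f k) \<le> (\<Sum>k\<in>F\<inter>G. ?g k)"
  proof (rule sum_mono)
    fix k
    show "?f k \<le> ?g k"
      using real_ge[OF e, where u="Crow_mult x I k b - lam" and w="Crow_mult x I k a - lam"] by (simp add: m_lam_def)
  qed
  have gnn: "\<And>k. 0 \<le> ?g k" using e by simp
  have s4: "(\<Sum>k\<in>F\<inter>G. ?g k) \<le> (\<Sum>k\<in>G. ?g k)"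
    by (rule sum_mono2[OF assms(4)]) (simp_all only: gnn Int_lower2)
  have h: "(\<Sum>k\<in>F. ?f k) \<le> (\<Sum>k\<in>G. ?g k)" using s1 s2 s3 s4 by linarith
  have h1: "(\<Sum>k\<in>F. ?f k) = (\<Sum>k\<in>F. m_lam x I lam eta a k * (Crow_mult x I k b - lam)) - (lam*eta/2)*(\<Sum>k\<in>F. (m_lam x I lam eta a k)^2)"
    by (simp only: sum_subtractf sum_distrib_left)
  have h2: "(\<Sum>k\<in>G. ?g k) = (lam*eta/2)*(\<Sum>k\<in>G. (m_lam x I lam eta b k)^2)"
    by (simp only: sum_distrib_left)
  have h3: "- (lam*eta/2)*(\<Sum>k\<in>G. (m_lam x I lam eta b k)^2) \<le> - (\<Sum>k\<in>F. m_lam x I lam eta a k * (Crow_mult x I k b - lam)) + (lam*eta/2)*(\<Sum>k\<in>F. (m_lam x I lam eta a k)^2)"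
    using h unfolding h1 h2 by argo
  show ?thesis unfolding Lag_def dual_sub_def using h3 by argo
qed


lemma dual_sub_gap: assumes "lam > 0" "eta > 0"
  shows "dual_sub x I L U lam eta F (cmb a b s) \<ge> Lag x I L U lam eta F a (cmb a b s)
     - s^2 * (\<Sum>k\<in>F. (Crow_mult x I k b - Crow_mult x I k a)^2/(2*(lam*eta)))"
proof -
  have e: "lam*eta > 0" using assms by simp
  let ?c = "cmb a b s"
  let ?f = "\<lambda>k. m_lam x I lam eta a k * (Crow_mult x I k ?c - lam) - (lam*eta/2)*(m_lam x I lam eta a k)^2
     + s^2 * ((Crow_mult x I k b - Crow_mult x I k a)^2/(2*(lam*eta)))"
  let ?g = "\<lambda>k. (lam*eta/2)*(m_lam x I lam eta ?c k)^2"
  have h: "(\<Sum>k\<in>F. ?g k) \<le> (\<Sum>k\<in>F. ?f k)"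
  proof (rule sum_mono)
    fix k
    have d: "(Crow_mult x I k ?c - lam - (Crow_mult x I k a - lam))^2/(2*(lam*eta))
       = s^2 * ((Crow_mult x I k b - Crow_mult x I k a)^2/(2*(lam*eta)))"
      unfolding crow_cmb by (simp add: power_mult_distrib)
    show "?g k \<le> ?f k"
      using real_gap[OF e, where u="Crow_mult x I k ?c - lam" and w="Crow_mult x I k a - lam"]
      unfolding d by (simp add: m_lam_def)
  qed
  have h1: "(\<Sum>k\<in>F. ?f k) = (\<Sum>k\<in>F. m_lam x I lam eta a k * (Crow_mult x I k ?c - lam)) - (lam*eta/2)*(\<Sum>k\<in>F. (m_lam x I lam eta a k)^2)
     + s^2 * (\<Sum>k\<in>F. (Crow_mult x I k b - Crow_mult x I k a)^2/(2*(lam*eta)))"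
    by (simp only: sum_subtractf sum.distrib sum_distrib_left)
  have h2: "(\<Sum>k\<in>F. ?g k) = (lam*eta/2)*(\<Sum>k\<in>F. (m_lam x I lam eta ?c k)^2)"
    by (simp only: sum_distrib_left)
  show ?thesis unfolding Lag_def dual_sub_def using h unfolding h1 h2 by argo
qed

lemma kkt: assumes "lam > 0" "eta > 0"
  "is_maximizer (dual_sub x I L U lam eta F) (dual_feasible I) a" "b \<in> dual_feasible I"
  shows "Lag x I L U lam eta F a b \<le> Lag x I L U lam eta F a a"
proof (rule ccontr)
  assume na: "\<not> ?thesis"
  define c where "c = Lag x I L U lam eta F a b - Lag x I L U lam eta F a a"
  have c0: "c > 0" using na unfolding c_def by simp
  define Q where "Q = (\<Sum>k\<in>F. (Crow_mult x I k b - Crow_mult x I k a)^2/(2*(lam*eta)))"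
  have Q0: "Q \<ge> 0" unfolding Q_def using assms(1,2) by (intro sum_nonneg) simp
  define s where "s = c/(2*Q+2*c)"
  have s0: "s > 0" unfolding s_def using c0 Q0 by simp
  have s1: "s \<le> 1" unfolding s_def using c0 Q0 by simp
  have sQ: "s * Q < c"
  proof -
    have "s * Q = c * (Q/(2*Q+2*c))" unfolding s_def by simp
    also have "Q/(2*Q+2*c) < 1" using c0 Q0 by simp
    then have "c * (Q/(2*Q+2*c)) < c * 1" using c0 by (intro mult_strict_left_mono) auto
    finally show ?thesis by simp
  qed
  have aF: "a \<in> dual_feasible I" using assms(3) by (simp add: is_maximizer_def)
  have cF: "cmb a b s \<in> dual_feasible I" using cmb_feasible[OF aF assms(4)] s0 s1 by simp
  have g: "dual_sub x I L U lam eta F (cmb a b s) \<ge> Lag x I L U lam eta F a (cmb a b s) - s^2 * Q"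
    unfolding Q_def by (rule dual_sub_gap[OF assms(1,2)])
  have l: "Lag x I L U lam eta F a (cmb a b s) \<ge> (1-s) * Lag x I L U lam eta F a a + s * Lag x I L U lam eta F a b"
  proof -
    have "0 \<le> s*(1-s)/4 * (\<Sum>z\<in>I. (b z - a z)^2)" using s0 s1 by (intro mult_nonneg_nonneg sum_nonneg) auto
    then show ?thesis unfolding lag_cmb by linarith
  qed
  have la: "Lag x I L U lam eta F a a = dual_sub x I L U lam eta F a" by (rule lag_at[OF assms(1,2)])
  have "s * c - s^2 * Q > 0"
  proof -
    have "s * c - s^2 * Q = s * (c - s*Q)" by (simp add: power2_eq_square algebra_simps)
    then show ?thesis using s0 sQ by simp
  qed
  then have "dual_sub x I L U lam eta F (cmb a b s) > dual_sub x I L U lam eta F a"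
    using g l la unfolding c_def by (simp add: algebra_simps)
  moreover have "dual_sub x I L U lam eta F (cmb a b s) \<le> dual_sub x I L U lam eta F a"
    using assms(3) cF by (simp add: is_maximizer_def)
  ultimately show False by simp
qed


lemma lag_unique: assumes "finite I" "b0 \<in> dual_feasible I" "b1 \<in> dual_feasible I"
  "\<forall>b\<in>dual_feasible I. Lag x I L U lam eta F a b \<le> M"
  "Lag x I L U lam eta F a b0 = M" "Lag x I L U lam eta F a b1 = M"
  shows "b0 = b1"
proof -
  have "cmb b0 b1 (1/2) \<in> dual_feasible I" by (rule cmb_feasible[OF assms(2,3)]) auto
  then have "Lag x I L U lam eta F a (cmb b0 b1 (1/2)) \<le> M" using assms(4) by blast
  then have "(1/2)*(1-1/2)/4 * (\<Sum>z\<in>I. (b1 z - b0 z)^2) \<le> 0"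
    unfolding lag_cmb assms(5,6) by simp
  then have "(\<Sum>z\<in>I. (b1 z - b0 z)^2) \<le> 0" by simp
  moreover have "(\<Sum>z\<in>I. (b1 z - b0 z)^2) \<ge> 0" by (rule sum_nonneg) simp
  ultimately have "(\<Sum>z\<in>I. (b1 z - b0 z)^2) = 0" by linarith
  then have "\<forall>z\<in>I. (b1 z - b0 z)^2 = 0" using assms(1) by (subst (asm) sum_nonneg_eq_0_iff) auto
  then have "\<forall>z\<in>I. b0 z = b1 z" by simp
  moreover have "\<forall>z. z \<notin> I \<longrightarrow> b0 z = b1 z" using assms(2,3) by (simp add: dual_feasible_def)
  ultimately show ?thesis by (intro ext) metis
qed

lemma dual_sub_mono: assumes "lam > 0" "eta > 0" "F \<subseteq> G" "finite G"
  shows "dual_sub x I L U lam eta G b \<le> dual_sub x I L U lam eta F b"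
proof -
  have "(\<Sum>k\<in>F. (m_lam x I lam eta b k)^2) \<le> (\<Sum>k\<in>G. (m_lam x I lam eta b k)^2)"
    by (rule sum_mono2[OF assms(4,3)]) simp
  moreover have "lam * eta / 2 \<ge> 0" using assms by simp
  ultimately have "(lam * eta / 2) * (\<Sum>k\<in>F. (m_lam x I lam eta b k)^2) \<le> (lam * eta / 2) * (\<Sum>k\<in>G. (m_lam x I lam eta b k)^2)"
    by (rule mult_left_mono)
  then show ?thesis unfolding dual_sub_def by linarith
qed

lemma m_lam_zero: "\<not> Crow_mult x I k b > lam \<Longrightarrow> m_lam x I lam eta b k = 0"
  by (simp add: m_lam_def)

lemma ws_eq: "dual_sub x I L U lam eta {1..p} b = dual_sub x I L U lam eta (working_set x I p lam b) b"
proof -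
  have "(\<Sum>k\<in>{1..p}. (m_lam x I lam eta b k)^2) = (\<Sum>k\<in>working_set x I p lam b. (m_lam x I lam eta b k)^2)"
    by (rule sum.mono_neutral_right) (auto simp: working_set_def m_lam_zero)
  then show ?thesis unfolding dual_sub_def by simp
qed

lemma obj_eq: "dual_obj x I p L U lam eta = dual_sub x I L U lam eta {1..p}"
  by (simp add: fun_eq_iff dual_obj_def dual_sub_def)

theorem theorem9:
  fixes n K p :: nat
    and x :: "nat \<Rightarrow> nat \<Rightarrow> real"
    and D S :: "nat \<Rightarrow> nat set"
    and L U eta lam :: real
    and \<alpha> :: "nat \<Rightarrow> (bool \<times> nat \<times> nat) \<Rightarrow> real"
  assumes "n \<ge> 1" and "K \<ge> 1" and "p \<ge> 1"
    and "\<forall>i\<in>{1..n}. \<forall>k\<in>{1..p}. x i k \<ge> 0"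
    and "\<forall>i\<in>{1..n}. D i \<subseteq> {1..n} \<and> card (D i) = K"
    and "\<forall>i\<in>{1..n}. S i \<subseteq> {1..n} \<and> card (S i) = K"
    and "L \<ge> U" and "U \<ge> 0" and "eta > 0" and "lam > 0"
    and "\<alpha> 0 \<in> dual_feasible (pair_idx n D S)"
    and "\<forall>t. is_maximizer
               (dual_sub x (pair_idx n D S) L U lam eta
                  (working_set x (pair_idx n D S) p lam (\<alpha> t)))
               (dual_feasible (pair_idx n D S)) (\<alpha> (Suc t))"
  shows "\<exists>T. is_maximizer (dual_obj x (pair_idx n D S) p L U lam eta)
                         (dual_feasible (pair_idx n D S)) (\<alpha> T)"
proof (rule ccontr)
  assume nT: "\<not> ?thesis"
  define I where "I = pair_idx n D S"
  define A where "A = dual_feasible I"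
  define W where "W t = working_set x I p lam (\<alpha> t)" for t
  define DS where "DS F b = dual_sub x I L U lam eta F b" for F b
  define v where "v t = DS (W t) (\<alpha> (Suc t))" for t
  have lam: "lam > 0" and eta: "eta > 0" using assms by auto
  have max: "\<And>t. is_maximizer (DS (W t)) A (\<alpha> (Suc t))"
    using assms(12) unfolding DS_def W_def A_def I_def by blast
  have finI: "finite I"
  proof -
    have "I \<subseteq> UNIV \<times> ({1..n} \<times> {1..n})"
      unfolding I_def pair_idx_def using assms(5,6) by auto
    moreover have "finite (UNIV \<times> ({1..n::nat} \<times> {1..n::nat}) :: (bool \<times> nat \<times> nat) set)" by simp
    ultimately show ?thesis by (rule finite_subset)
  qed
  have Wsub: "\<And>t. W t \<subseteq> {1..p}" unfolding W_def working_set_def by auto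
  have step: "v (Suc t) < v t" for t
  proof -
    define a where "a = \<alpha> (Suc t)"
    define b where "b = \<alpha> (Suc (Suc t))"
    have aA: "a \<in> A" using max[of t] unfolding a_def is_maximizer_def by simp
    have bA: "b \<in> A" using max[of "Suc t"] unfolding b_def is_maximizer_def by simp
    have WS: "W (Suc t) = working_set x I p lam a" unfolding W_def a_def by simp
    have z: "\<forall>k\<in>W t - W (Suc t). m_lam x I lam eta a k = 0"
      using Wsub[of t] unfolding WS working_set_def by (auto intro: m_lam_zero)
    have finW: "finite (W t)" "finite (W (Suc t))" using Wsub by (auto intro: finite_subset)
    have LK: "\<forall>c\<in>A. Lag x I L U lam eta (W t) a c \<le> Lag x I L U lam eta (W t) a a"
      using kkt[OF lam eta] max[of t] unfolding a_def DS_def A_def by blast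
    have la: "Lag x I L U lam eta (W t) a a = v t"
      unfolding v_def DS_def a_def by (rule lag_at[OF lam eta])
    have up: "v (Suc t) \<le> Lag x I L U lam eta (W t) a b"
      unfolding v_def DS_def b_def[symmetric] by (rule lag_upper[OF lam eta finW z])
    have "v (Suc t) \<le> v t" using up LK bA la by fastforce
    moreover have "v (Suc t) \<noteq> v t"
    proof
      assume eq: "v (Suc t) = v t"
      then have "Lag x I L U lam eta (W t) a b = Lag x I L U lam eta (W t) a a"
        using up LK bA la by fastforce
      then have ba: "b = a" using lag_unique[OF finI bA[unfolded A_def] aA[unfolded A_def]] LK la
        unfolding A_def by simp
      have "is_maximizer (DS (working_set x I p lam a)) A a"
        using max[of "Suc t"] unfolding b_def[symmetric] ba WS .
      then have "is_maximizer (dual_obj x I p L U lam eta) A a"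
        unfolding is_maximizer_def obj_eq DS_def
        using ws_eq[of x I L U lam eta p a] dual_sub_mono[OF lam eta _ finite_atLeastAtMost]
          working_set_def
        by (smt (verit) mem_Collect_eq subsetI)
      then show False using nT unfolding A_def I_def a_def by blast
    qed
    ultimately show ?thesis by simp
  qed
  have dec: "s < t \<Longrightarrow> v t < v s" for s t
    using lift_Suc_mono_less[of "\<lambda>t. - v t"] step by force
  have "inj W"
  proof (rule injI)
    fix s t assume "W s = W t"
    then have "is_maximizer (DS (W s)) A (\<alpha> (Suc t))" using max[of t] by simp
    then have "v s = v t" using max[of s] unfolding v_def is_maximizer_def
      using \<open>W s = W t\<close> by (metis order_antisym)
    then show "s = t" using dec by (metis less_irrefl linorder_neqE_nat)
  qed
  moreover have "finite (range W)"
    by (rule finite_subset[of _ "Pow {1..p}"]) (use Wsub in auto)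
  ultimately have "finite (UNIV :: nat set)" using finite_imageD by blast
  then show False by simp
qed

end
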